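(* Let $S$ be a Clifford semigroup which is a strong semilattice of groups $\{G_y: y\in Y\}$ over a finite semilattice $Y$. If $S$ is left fairly amenable, then at least one of the groups $G_y$ is amenable.
   Context: A strong semilattice of groups over a semilattice $Y$ is the disjoint union $S=\bigcup_{y\in Y}G_y$ of groups, together with group homomorphisms $\phi_{y,z}:G_y\to G_z$ for $y\ge z$ (with $\phi_{y,y}$ the identity and $\phi_{z,w}\phi_{y,z}=\phi_{y,w}$), and product $ab=\phi_{y,y\wedge z}(a)\phi_{z,y\wedge z}(b)$ for $a\in G_y$, $b\in G_z$. $s$ acts injectively on the left of $A\subseteq S$ if $a\mapsto sa$ is injective on $A$. $S$ is left fairly amenable if there is $\mu:\mathcal P(S)\to[0,1]$, $\mu(S)=1$, additive on disjoint sets, with $\mu(sA)=\mu(A)$ whenever $s$ acts injectively on the left of $A$. A group $G$ is amenable if it admits a finitely-additive probability measure with $\mu(gA)=\mu(A)$ for all $g\in G$, $A\subseteq G$. *)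

theory Defs
  imports Complex_Main "HOL-Algebra.Group"
begin

definition left_fairly_amenable :: "'a set \<Rightarrow> ('a \<Rightarrow> 'a \<Rightarrow> 'a) \<Rightarrow> bool" where
  "left_fairly_amenable S op \<longleftrightarrow>
     (\<exists>\<mu> :: 'a set \<Rightarrow> real.
        (\<forall>A. A \<subseteq> S \<longrightarrow> 0 \<le> \<mu> A \<and> \<mu> A \<le> 1) \<and>
        \<mu> S = 1 \<and>
        (\<forall>A B. A \<subseteq> S \<longrightarrow> B \<subseteq> S \<longrightarrow> A \<inter> B = {} \<longrightarrow> \<mu> (A \<union> B) = \<mu> A + \<mu> B) \<and>
        (\<forall>s A. s \<in> S \<longrightarrow> A \<subseteq> S \<longrightarrow> inj_on (op s) A \<longrightarrow> \<mu> (op s ` A) = \<mu> A))"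

definition amenable_group :: "('g, 'b) monoid_scheme \<Rightarrow> bool" where
  "amenable_group G \<longleftrightarrow>
     (\<exists>\<mu> :: 'g set \<Rightarrow> real.
        (\<forall>A. A \<subseteq> carrier G \<longrightarrow> 0 \<le> \<mu> A \<and> \<mu> A \<le> 1) \<and>
        \<mu> (carrier G) = 1 \<and>
        (\<forall>A B. A \<subseteq> carrier G \<longrightarrow> B \<subseteq> carrier G \<longrightarrow> A \<inter> B = {} \<longrightarrow>
               \<mu> (A \<union> B) = \<mu> A + \<mu> B) \<and>
        (\<forall>g A. g \<in> carrier G \<longrightarrow> A \<subseteq> carrier G \<longrightarrow>
               \<mu> ((\<lambda>a. g \<otimes>\<^bsub>G\<^esub> a) ` A) = \<mu> A))"

definition strong_semilattice_of_groups ::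
  "('y::semilattice_inf \<Rightarrow> ('g, 'b) monoid_scheme) \<Rightarrow> ('y \<Rightarrow> 'y \<Rightarrow> 'g \<Rightarrow> 'g) \<Rightarrow> bool" where
  "strong_semilattice_of_groups G \<phi> \<longleftrightarrow>
     (\<forall>y. group (G y)) \<and>
     (\<forall>y z. z \<le> y \<longrightarrow> \<phi> y z \<in> hom (G y) (G z)) \<and>
     (\<forall>y a. a \<in> carrier (G y) \<longrightarrow> \<phi> y y a = a) \<and>
     (\<forall>y z w a. w \<le> z \<longrightarrow> z \<le> y \<longrightarrow> a \<in> carrier (G y) \<longrightarrow>
        \<phi> z w (\<phi> y z a) = \<phi> y w a)"

definition ssl_carrier :: "('y \<Rightarrow> ('g, 'b) monoid_scheme) \<Rightarrow> ('y \<times> 'g) set" where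
  "ssl_carrier G = (SIGMA y:UNIV. carrier (G y))"

definition ssl_mult ::
  "('y::semilattice_inf \<Rightarrow> ('g, 'b) monoid_scheme) \<Rightarrow> ('y \<Rightarrow> 'y \<Rightarrow> 'g \<Rightarrow> 'g) \<Rightarrow>
   'y \<times> 'g \<Rightarrow> 'y \<times> 'g \<Rightarrow> 'y \<times> 'g" where
  "ssl_mult G \<phi> p q =
     (let y = fst p; z = fst q; m = inf y z
      in (m, \<phi> y m (snd p) \<otimes>\<^bsub>G m\<^esub> \<phi> z m (snd q)))"

end

theory Submission
  imports Defs
begin

lemma union_sum:
  fixes \<mu> :: "'a set \<Rightarrow> real" and T :: "'i \<Rightarrow> 'a set"
  assumes add: "\<forall>A B. A \<subseteq> S \<longrightarrow> B \<subseteq> S \<longrightarrow> A \<inter> B = {} \<longrightarrow> \<mu> (A \<union> B) = \<mu> A + \<mu> B"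
    and sub: "\<And>i. T i \<subseteq> S" and disj: "\<And>i j. i \<noteq> j \<Longrightarrow> T i \<inter> T j = {}"
    and fin: "finite F"
  shows "\<mu> (\<Union>i\<in>F. T i) = (\<Sum>i\<in>F. \<mu> (T i))"
  using fin
proof (induction F rule: finite_induct)
  case empty
  have "\<mu> ({} \<union> {}) = \<mu> {} + \<mu> {}" by (rule add[rule_format]) auto
  then show ?case by simp
next
  case (insert x F)
  have "\<mu> (T x \<union> (\<Union>i\<in>F. T i)) = \<mu> (T x) + \<mu> (\<Union>i\<in>F. T i)"
  proof (rule add[rule_format])
    show "T x \<inter> (\<Union>i\<in>F. T i) = {}" using disj insert(2) by (metis (no_types, lifting) UN_E disjoint_iff)
  qed (use sub in auto)
  then show ?case using insert by simp
qed

theorem mainTheorem15: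
  fixes G :: "'y::{semilattice_inf, finite} \<Rightarrow> ('g, 'b) monoid_scheme"
    and \<phi> :: "'y \<Rightarrow> 'y \<Rightarrow> 'g \<Rightarrow> 'g"
  assumes "strong_semilattice_of_groups G \<phi>"
    and "left_fairly_amenable (ssl_carrier G) (ssl_mult G \<phi>)"
  shows "\<exists>y. amenable_group (G y)"
proof -
  let ?S = "ssl_carrier G"
  obtain \<mu> :: "('y \<times> 'g) set \<Rightarrow> real" where
    bnd: "\<forall>A. A \<subseteq> ?S \<longrightarrow> 0 \<le> \<mu> A \<and> \<mu> A \<le> 1" and one: "\<mu> ?S = 1" and
    add: "\<forall>A B. A \<subseteq> ?S \<longrightarrow> B \<subseteq> ?S \<longrightarrow> A \<inter> B = {} \<longrightarrow> \<mu> (A \<union> B) = \<mu> A + \<mu> B" and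
    inv: "\<forall>s A. s \<in> ?S \<longrightarrow> A \<subseteq> ?S \<longrightarrow> inj_on (ssl_mult G \<phi> s) A \<longrightarrow> \<mu> (ssl_mult G \<phi> s ` A) = \<mu> A"
    using assms(2) unfolding left_fairly_amenable_def by blast
  have grp: "\<And>y. group (G y)" and idm: "\<And>y a. a \<in> carrier (G y) \<Longrightarrow> \<phi> y y a = a"
    using assms(1) unfolding strong_semilattice_of_groups_def by auto
  define T where "T y = Pair y ` carrier (G y)" for y
  have Tsub: "\<And>y. T y \<subseteq> ?S" unfolding T_def ssl_carrier_def by auto
  have Tdisj: "\<And>i j. i \<noteq> j \<Longrightarrow> T i \<inter> T j = {}" unfolding T_def by auto
  have "?S = (\<Union>y\<in>UNIV. T y)" unfolding T_def ssl_carrier_def by auto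
  moreover have "\<mu> (\<Union>y\<in>UNIV. T y) = (\<Sum>y\<in>UNIV. \<mu> (T y))"
    proof -
    note u = union_sum[where S="?S" and \<mu>=\<mu> and T=T and F=UNIV]
    show ?thesis
      apply (rule u)
         apply (rule add)
        apply (rule Tsub)
       apply (erule Tdisj)
      apply (rule finite_class.finite_UNIV)
      done
  qed
  ultimately have "(\<Sum>y\<in>UNIV. \<mu> (T y)) = 1" using one by (simp only:)
  then have "\<not> (\<forall>y\<in>UNIV. \<mu> (T y) = 0)" using sum.neutral[of UNIV "\<lambda>y. \<mu> (T y)"] by linarith
  then obtain y where "\<mu> (T y) \<noteq> 0" by blast
  moreover have "0 \<le> \<mu> (T y)" using bnd Tsub by blast
  ultimately have pos: "\<mu> (T y) > 0" by simp
  interpret g: group "G y" by (rule grp)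
  define \<nu> where "\<nu> A = \<mu> (Pair y ` A) / \<mu> (T y)" for A
  have sub: "A \<subseteq> carrier (G y) \<Longrightarrow> Pair y ` A \<subseteq> T y" for A unfolding T_def by auto
  have le: "A \<subseteq> carrier (G y) \<Longrightarrow> 0 \<le> \<mu> (Pair y ` A) \<and> \<mu> (Pair y ` A) \<le> \<mu> (T y)" for A
  proof -
    assume A: "A \<subseteq> carrier (G y)"
    have e: "T y = Pair y ` A \<union> (T y - Pair y ` A)" using sub[OF A] by auto
    have "\<mu> (T y) = \<mu> (Pair y ` A) + \<mu> (T y - Pair y ` A)"
    proof (subst e, rule add[rule_format])
      show "Pair y ` A \<subseteq> ?S" using sub[OF A] Tsub[of y] by (rule order_trans)
      show "T y - Pair y ` A \<subseteq> ?S" using Tsub[of y] by blast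
      show "Pair y ` A \<inter> (T y - Pair y ` A) = {}" by blast
    qed
    moreover have "0 \<le> \<mu> (T y - Pair y ` A)"
      using bnd[rule_format, of "T y - Pair y ` A"] Tsub[of y] by blast
    moreover have "0 \<le> \<mu> (Pair y ` A)"
      using bnd[rule_format, of "Pair y ` A"] sub[OF A] Tsub[of y] by blast
    ultimately show ?thesis by simp
  qed
  have "amenable_group (G y)"
    unfolding amenable_group_def
  proof (intro exI[of _ \<nu>] conjI allI impI)
    fix A assume A: "A \<subseteq> carrier (G y)"
    show "0 \<le> \<nu> A" "\<nu> A \<le> 1" unfolding \<nu>_def using le[OF A] pos by auto
  next
    show "\<nu> (carrier (G y)) = 1" unfolding \<nu>_def T_def using pos T_def by simp
  next
    fix A B assume A: "A \<subseteq> carrier (G y)" and B: "B \<subseteq> carrier (G y)" and d: "A \<inter> B = {}"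
    have "\<mu> (Pair y ` A \<union> Pair y ` B) = \<mu> (Pair y ` A) + \<mu> (Pair y ` B)"
    proof (rule add[rule_format])
      show "Pair y ` A \<subseteq> ?S" using sub[OF A] Tsub[of y] by (rule order_trans)
      show "Pair y ` B \<subseteq> ?S" using sub[OF B] Tsub[of y] by (rule order_trans)
      show "Pair y ` A \<inter> Pair y ` B = {}" using d by blast
    qed
    then show "\<nu> (A \<union> B) = \<nu> A + \<nu> B" unfolding \<nu>_def by (simp add: image_Un add_divide_distrib)
  next
    fix g A assume g: "g \<in> carrier (G y)" and A: "A \<subseteq> carrier (G y)"
    have pt: "ssl_mult G \<phi> (y, g) (y, a) = (y, g \<otimes>\<^bsub>G y\<^esub> a)" if "a \<in> carrier (G y)" for a
      unfolding ssl_mult_def Let_def using idm[OF g] idm[OF that] by simp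
    have img: "ssl_mult G \<phi> (y, g) ` (Pair y ` A) = Pair y ` ((\<lambda>a. g \<otimes>\<^bsub>G y\<^esub> a) ` A)"
      unfolding image_image using pt A by (intro image_cong) auto
    have inj: "inj_on (ssl_mult G \<phi> (y, g)) (Pair y ` A)"
    proof (rule inj_onI)
      fix p q assume "p \<in> Pair y ` A" "q \<in> Pair y ` A" and eq: "ssl_mult G \<phi> (y, g) p = ssl_mult G \<phi> (y, g) q"
      then obtain a b where p: "p = (y, a)" "a \<in> A" and q: "q = (y, b)" "b \<in> A" by blast
      have "g \<otimes>\<^bsub>G y\<^esub> a = g \<otimes>\<^bsub>G y\<^esub> b" using eq p q pt A by (metis subsetD snd_conv)
      then have "a = b" using g A p q by (metis g.Units_eq g.Units_l_cancel subsetD)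
      then show "p = q" using p q by simp
    qed
    have PA: "Pair y ` A \<subseteq> ?S" using sub[OF A] Tsub[of y] by (rule order_trans)
    have "(y, g) \<in> ?S" using g unfolding ssl_carrier_def by auto
    then have "\<mu> (ssl_mult G \<phi> (y, g) ` (Pair y ` A)) = \<mu> (Pair y ` A)"
      by (rule inv[rule_format, OF _ PA inj])
    then show "\<nu> ((\<lambda>a. g \<otimes>\<^bsub>G y\<^esub> a) ` A) = \<nu> A" unfolding \<nu>_def using img by simp
  qed
  then show ?thesis by blast
qed

end
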